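(* With $\ell_n=\Psi(L_n)$, $z_n=\Psi(Z_n)$, $h_n=\Psi(H_n)$ for $n\ge1$ and $\ell_0=z_0=h_0=1$: (i) $\ell_n=4\ell_{n-1}+\ell_{n-4}+\ell_{n-5}$ for $n\ge5$, with $\ell_0=1,\ell_1=5,\ell_2=20,\ell_3=79,\ell_4=317$; (ii) $z_n=3z_{n-1}+z_{n-2}+6z_{n-3}+7z_{n-4}+7z_{n-5}+5z_{n-6}+z_{n-7}$ for $n\ge7$, with $z_0=1,z_1=5,z_2=20,z_3=75,z_4=288,z_5=1105,z_6=4234$; (iii) $h_n=h_{n-1}+7h_{n-2}+12h_{n-3}+6h_{n-4}+7h_{n-5}+4h_{n-6}+2h_{n-7}$ for $n\ge7$, with $h_0=1,h_1=5,h_2=20,h_3=75,h_4=288,h_5=1094,h_6=4171$.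
   Context: A matching of a graph is a set of pairwise vertex-disjoint edges; it is maximal if it is not a proper subset of another matching. $\Psi(G)$ is the number of maximal matchings of $G$. A benzenoid system is a connected plane graph without cut-vertices in which every bounded face is a hexagon, any two hexagonal faces being either disjoint or sharing exactly one edge (then they are adjacent). It is catacondensed if no vertex lies in three hexagons, and a benzenoid chain if moreover no hexagon is adjacent to three other hexagons; its length is its number of hexagons. In a chain, the two hexagons adjacent to only one other hexagon are terminal, the rest interior. An interior hexagon has exactly two vertices of degree 2; it is straight if these are non-adjacent and kinky if they are adjacent. $L_n$ (polyacene) is the benzenoid chain of length $n$ all of whose interior hexagons are straight. $Z_n$ (zig-zag polyphenacene) is the benzenoid chain of length $n$ with all interior hexagons kinky and successive kinks turning alternately in opposite directions; $H_n$ (helicene) is the one of length $n$ with all interior hexagons kinky and all kinks turning in the same direction (viewed as an abstract graph). *)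

theory Defs
  imports Main
begin

text \<open>Graphs are given by their edge sets: each edge is a 2-element set of vertices.\<close>

definition matching :: "'a set set \<Rightarrow> bool" where
  "matching M \<longleftrightarrow> (\<forall>e\<in>M. \<forall>f\<in>M. e \<noteq> f \<longrightarrow> e \<inter> f = {})"

definition maximal_matching :: "'a set set \<Rightarrow> 'a set set \<Rightarrow> bool" where
  "maximal_matching E M \<longleftrightarrow> M \<subseteq> E \<and> matching M \<and>
     \<not> (\<exists>M'. M \<subset> M' \<and> M' \<subseteq> E \<and> matching M')"

definition Psi :: "'a set set \<Rightarrow> nat" where
  "Psi E = card {M. maximal_matching E M}"

text \<open>Hexagon attached along the edge a-b, with fresh vertices k, k+1, k+2, k+3;
  its (counterclockwise) boundary cycle is a, b, k, k+1, k+2, k+3.\<close>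
definition hex :: "nat \<Rightarrow> nat \<Rightarrow> nat \<Rightarrow> nat set set" where
  "hex a b k = {{a,b},{b,k},{k,k+1},{k+1,k+2},{k+2,k+3},{k+3,a}}"

text \<open>Edge of the current hexagon at which the next hexagon is attached
  (oriented counterclockwise for the next hexagon):
  0 = kink to one side, 1 = straight (opposite edge), 2 = kink to the other side.\<close>
fun exit_edge :: "nat \<Rightarrow> nat \<Rightarrow> nat \<times> nat" where
  "exit_edge d k = (if d = 0 then (k+1, k) else if d = 1 then (k+2, k+1) else (k+3, k+2))"

fun hexchain :: "nat \<Rightarrow> nat \<Rightarrow> nat \<Rightarrow> nat list \<Rightarrow> nat set set" where
  "hexchain a b k [] = hex a b k"
| "hexchain a b k (d # ds) =
     hex a b k \<union> (case exit_edge d k of (a', b') \<Rightarrow> hexchain a' b' (k+4) ds)"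

text \<open>Benzenoid chain with length ds + 1 hexagons.\<close>
definition benz_chain :: "nat list \<Rightarrow> nat set set" where
  "benz_chain ds = hexchain 0 1 2 ds"

definition polyacene :: "nat \<Rightarrow> nat set set" where
  "polyacene n = benz_chain (replicate (n - 1) 1)"

definition zigzag :: "nat \<Rightarrow> nat set set" where
  "zigzag n = benz_chain (map (\<lambda>i. if even i then 0 else 2) [0..<n - 1])"

definition helicene :: "nat \<Rightarrow> nat set set" where
  "helicene n = benz_chain (replicate (n - 1) 0)"

definition ell :: "nat \<Rightarrow> nat" where "ell n = (if n = 0 then 1 else Psi (polyacene n))"
definition zz :: "nat \<Rightarrow> nat" where "zz n = (if n = 0 then 1 else Psi (zigzag n))"
definition hh :: "nat \<Rightarrow> nat" where "hh n = (if n = 0 then 1 else Psi (helicene n))"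

end

theory Submission
  imports Defs
begin

lemma matching_subset: "matching M \<Longrightarrow> N \<subseteq> M \<Longrightarrow> matching N"
  unfolding matching_def by blast

lemma maximal_matching_iff:
  assumes "\<forall>e\<in>E. e \<noteq> {}"
  shows "maximal_matching E M \<longleftrightarrow> M \<subseteq> E \<and> matching M \<and> (\<forall>e\<in>E. e \<inter> \<Union>M \<noteq> {})"
proof
  assume mm: "maximal_matching E M"
  hence M: "M \<subseteq> E" "matching M" unfolding maximal_matching_def by auto
  have "e \<inter> \<Union>M \<noteq> {}" if "e \<in> E" for e
  proof
    assume dis: "e \<inter> \<Union>M = {}"
    have "e \<notin> M" using dis assms that by blast
    moreover have "matching (insert e M)" using M(2) dis unfolding matching_def by blast
    ultimately show False using mm that M(1) unfolding maximal_matching_def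
      by (metis insert_subset psubsetI subset_insertI)
  qed
  thus "M \<subseteq> E \<and> matching M \<and> (\<forall>e\<in>E. e \<inter> \<Union>M \<noteq> {})" using M by blast
next
  assume A: "M \<subseteq> E \<and> matching M \<and> (\<forall>e\<in>E. e \<inter> \<Union>M \<noteq> {})"
  have "\<not> (\<exists>M'. M \<subset> M' \<and> M' \<subseteq> E \<and> matching M')"
  proof
    assume "\<exists>M'. M \<subset> M' \<and> M' \<subseteq> E \<and> matching M'"
    then obtain M' e where M': "M \<subset> M'" "M' \<subseteq> E" "matching M'" "e \<in> M'" "e \<notin> M" by blast
    have "e \<inter> \<Union>M = {}" using M' unfolding matching_def by fastforce
    thus False using A M' by blast
  qed
  thus "maximal_matching E M" using A unfolding maximal_matching_def by blast
qed

type_synonym st = "bool \<times> bool \<times> bool \<times> bool"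
definition states :: "st list" where "states = [(False,False,False,False), (False,False,False,True), (False,False,True,False), (False,False,True,True), (False,True,False,False), (False,True,False,True), (False,True,True,False), (False,True,True,True), (True,False,False,False), (True,False,False,True), (True,False,True,False), (True,False,True,True), (True,True,False,False), (True,True,False,True), (True,True,True,False), (True,True,True,True)]"

lemma distinct_states: "distinct states" by (simp add: states_def)
lemma in_states: "s \<in> set states"
proof -
  obtain a b c d where "s = (a,b,c,d)" by (cases s) auto
  thus ?thesis by (cases a; cases b; cases c; cases d) (simp_all add: states_def)
qed

definition sel :: "bool \<Rightarrow> bool \<Rightarrow> nat \<Rightarrow> nat \<Rightarrow> nat set" where
  "sel x y p q = (if x then {p} else {}) \<union> (if y then {q} else {})"

fun Xs :: "st \<Rightarrow> nat \<Rightarrow> nat \<Rightarrow> nat set" where "Xs (x1,x2,y1,y2) p q = sel x1 x2 p q"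
fun Ys :: "st \<Rightarrow> nat \<Rightarrow> nat \<Rightarrow> nat set" where "Ys (x1,x2,y1,y2) p q = sel y1 y2 p q"

lemma sel_sub: "sel x y p q \<subseteq> {p,q}" by (auto simp: sel_def)
lemma Xs_sub: "Xs s p q \<subseteq> {p,q}" by (cases s) (simp add: sel_sub)
lemma Ys_sub: "Ys s p q \<subseteq> {p,q}" by (cases s) (simp add: sel_sub)
lemma sel_int: "sel (p \<in> A) (q \<in> A) p q = A \<inter> {p,q}" by (auto simp: sel_def)
lemma sel_eq_int: "p \<noteq> q \<Longrightarrow> sel x y p q = A \<inter> {p,q} \<longleftrightarrow> (x = (p \<in> A) \<and> y = (q \<in> A))"
  by (auto simp: sel_def)

definition Gs :: "nat set set \<Rightarrow> nat \<Rightarrow> nat \<Rightarrow> nat set \<Rightarrow> nat set \<Rightarrow> nat set set set" where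
  "Gs E p q X0 Y0 = {M. M \<subseteq> E \<and> matching M \<and> \<Union>M \<inter> {p,q} = Y0 \<and> \<Union>M \<inter> X0 = {}
     \<and> (\<forall>e\<in>E. e \<inter> (\<Union>M \<union> X0) \<noteq> {})}"

definition Loc :: "nat set set \<Rightarrow> nat set \<Rightarrow> nat \<Rightarrow> nat \<Rightarrow> nat \<Rightarrow> nat \<Rightarrow> nat set \<Rightarrow> nat set \<Rightarrow> nat set \<Rightarrow> nat set \<Rightarrow> nat set set set" where
  "Loc H f p q p' q' X0 Y0 X Y = {L. L \<subseteq> H - {f} \<and> matching L \<and> \<Union>L \<inter> Y = {} \<and> \<Union>L \<inter> {p,q} = Y0
     \<and> \<Union>L \<inter> X0 = {} \<and> \<Union>L \<inter> {p',q'} = X \<and> (\<forall>e\<in>H - {f}. e \<inter> (\<Union>L \<union> Y \<union> X0) \<noteq> {})}"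

lemma decomp:
  assumes fin: "finite H" "finite T"
  and f: "f = {p',q'}" "f \<in> H" "f \<in> T" "p' \<noteq> q'"
  and HV: "\<forall>e\<in>H. e \<subseteq> VH" and TV: "\<forall>e\<in>T. e \<subseteq> VT" and VHT: "VH \<inter> VT = {p',q'}"
  and pq: "p \<notin> VT" "q \<notin> VT"
  and HT: "H \<inter> T = {f}"
  shows "card (Gs (H \<union> T) p q (Xs s p q) (Ys s p q)) =
    (\<Sum>t\<leftarrow>states. card (Loc H f p q p' q' (Xs s p q) (Ys s p q) (Xs t p' q') (Ys t p' q'))
                  * card (Gs T p' q' (Xs t p' q') (Ys t p' q')))"
proof -
  define X0 where "X0 = Xs s p q"
  define Y0 where "Y0 = Ys s p q"
  have X0s: "X0 \<subseteq> {p,q}" "Y0 \<subseteq> {p,q}" unfolding X0_def Y0_def by (rule Xs_sub, rule Ys_sub)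
  define LT where "LT t = Loc H f p q p' q' X0 Y0 (Xs t p' q') (Ys t p' q')" for t
  define GT where "GT t = Gs T p' q' (Xs t p' q') (Ys t p' q')" for t
  define G where "G = Gs (H \<union> T) p q X0 Y0"
  define S where "S = (SIGMA t:set states. LT t \<times> GT t)"
  define \<phi> where "\<phi> N = ((p' \<in> \<Union>(N-T), q' \<in> \<Union>(N-T), p' \<in> \<Union>(N\<inter>T), q' \<in> \<Union>(N\<inter>T)), (N - T, N \<inter> T))" for N
  have UH: "\<Union>L \<subseteq> VH" if "L \<subseteq> H" for L using that HV by blast
  have UT: "\<Union>L \<subseteq> VT" if "L \<subseteq> T" for L using that TV by blast
  have pqV: "p' \<in> VH" "q' \<in> VH" "p' \<in> VT" "q' \<in> VT" using VHT by auto
  have inj: "inj_on \<phi> G"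
  proof (rule inj_onI)
    fix N N' assume "N \<in> G" "N' \<in> G" "\<phi> N = \<phi> N'"
    hence "N - T = N' - T" "N \<inter> T = N' \<inter> T" unfolding \<phi>_def by auto
    thus "N = N'" by blast
  qed
  have img1: "\<phi> N \<in> S" if N: "N \<in> G" for N
  proof -
    define L where "L = N - T"
    define M where "M = N \<inter> T"
    define t where "t = (p' \<in> \<Union>L, q' \<in> \<Union>L, p' \<in> \<Union>M, q' \<in> \<Union>M)"
    have N1: "N \<subseteq> H \<union> T" "matching N" "\<Union>N \<inter> {p,q} = Y0" "\<Union>N \<inter> X0 = {}"
      "\<forall>e\<in>H \<union> T. e \<inter> (\<Union>N \<union> X0) \<noteq> {}" using N unfolding G_def Gs_def by auto
    have NLM: "N = L \<union> M" unfolding L_def M_def by blast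
    have Lsub: "L \<subseteq> H - {f}" unfolding L_def using N1(1) f(3) by blast
    have Msub: "M \<subseteq> T" unfolding M_def by blast
    have XL: "Xs t p' q' = \<Union>L \<inter> {p',q'}" unfolding t_def Xs.simps Ys.simps by (rule sel_int)
    have YM: "Ys t p' q' = \<Union>M \<inter> {p',q'}" unfolding t_def Xs.simps Ys.simps by (rule sel_int)
    have disj: "\<Union>L \<inter> \<Union>M = {}"
    proof -
      have "e \<inter> e' = {}" if "e \<in> L" "e' \<in> M" for e e'
      proof -
        have "e \<noteq> e'" using that unfolding L_def M_def by blast
        moreover have "e \<in> N" "e' \<in> N" using that NLM by auto
        ultimately show ?thesis using N1(2) unfolding matching_def by blast
      qed
      thus ?thesis by blast
    qed
    have uL: "\<Union>L \<subseteq> VH" using UH Lsub by blast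
    have uM: "\<Union>M \<subseteq> VT" using UT Msub by blast
    have "L \<in> LT t"
      unfolding LT_def Loc_def
    proof (intro CollectI conjI)
      show "L \<subseteq> H - {f}" by (fact Lsub)
      show "matching L" using N1(2) matching_subset unfolding L_def by blast
      show "\<Union>L \<inter> Ys t p' q' = {}" using disj YM by blast
      show "\<Union>L \<inter> {p,q} = Y0" using N1(3) NLM uM pq by blast
      show "\<Union>L \<inter> X0 = {}" using N1(4) NLM by blast
      show "\<Union>L \<inter> {p',q'} = Xs t p' q'" using XL by simp
      show "\<forall>e\<in>H - {f}. e \<inter> (\<Union>L \<union> Ys t p' q' \<union> X0) \<noteq> {}"
      proof
        fix e assume e: "e \<in> H - {f}"
        have "e \<inter> (\<Union>N \<union> X0) \<noteq> {}" using N1(5) e by blast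
        moreover have "e \<subseteq> VH" using HV e by blast
        ultimately show "e \<inter> (\<Union>L \<union> Ys t p' q' \<union> X0) \<noteq> {}" using NLM YM uM VHT by blast
      qed
    qed
    moreover have "M \<in> GT t"
      unfolding GT_def Gs_def
    proof (intro CollectI conjI)
      show "M \<subseteq> T" by (fact Msub)
      show "matching M" using N1(2) matching_subset unfolding M_def by blast
      show "\<Union>M \<inter> {p',q'} = Ys t p' q'" using YM by simp
      show "\<Union>M \<inter> Xs t p' q' = {}" using disj XL by blast
      show "\<forall>e\<in>T. e \<inter> (\<Union>M \<union> Xs t p' q') \<noteq> {}"
      proof
        fix e assume e: "e \<in> T"
        have "e \<inter> (\<Union>N \<union> X0) \<noteq> {}" using N1(5) e by blast
        moreover have "e \<subseteq> VT" using TV e by blast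
        ultimately show "e \<inter> (\<Union>M \<union> Xs t p' q') \<noteq> {}" using NLM XL uL VHT X0s pq by blast
      qed
    qed
    moreover have "t \<in> set states" by (rule in_states)
    moreover have "\<phi> N = (t, (L, M))" unfolding \<phi>_def t_def L_def M_def by simp
    ultimately show ?thesis unfolding S_def by simp
  qed
  have img2: "x \<in> \<phi> ` G" if x: "x \<in> S" for x
  proof -
    obtain t L M where x: "x = (t, (L, M))" and L: "L \<in> LT t" and M: "M \<in> GT t"
      using x unfolding S_def by auto
    obtain t1 t2 t3 t4 where t: "t = (t1,t2,t3,t4)" by (cases t) auto
    have L1: "L \<subseteq> H - {f}" "matching L" "\<Union>L \<inter> Ys t p' q' = {}" "\<Union>L \<inter> {p,q} = Y0"
      "\<Union>L \<inter> X0 = {}" "\<Union>L \<inter> {p',q'} = Xs t p' q'" "\<forall>e\<in>H - {f}. e \<inter> (\<Union>L \<union> Ys t p' q' \<union> X0) \<noteq> {}"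
      using L unfolding LT_def Loc_def by auto
    have M1: "M \<subseteq> T" "matching M" "\<Union>M \<inter> {p',q'} = Ys t p' q'" "\<Union>M \<inter> Xs t p' q' = {}"
      "\<forall>e\<in>T. e \<inter> (\<Union>M \<union> Xs t p' q') \<noteq> {}" using M unfolding GT_def Gs_def by auto
    have LT0: "L \<inter> T = {}" using L1(1) HT by blast
    have uL: "\<Union>L \<subseteq> VH" using UH L1(1) by blast
    have uM: "\<Union>M \<subseteq> VT" using UT M1(1) by blast
    have disj: "\<Union>L \<inter> \<Union>M = {}" using uL uM VHT L1(3) M1(3) by blast
    define N where "N = L \<union> M"
    have "N \<in> G" unfolding G_def Gs_def
    proof (intro CollectI conjI)
      show "N \<subseteq> H \<union> T" using L1(1) M1(1) unfolding N_def by blast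
      show "matching N" unfolding N_def matching_def
      proof (intro ballI impI)
        fix e e' assume "e \<in> L \<union> M" "e' \<in> L \<union> M" "e \<noteq> e'"
        thus "e \<inter> e' = {}" using L1(2) M1(2) disj unfolding matching_def by blast
      qed
      show "\<Union>N \<inter> {p,q} = Y0" using L1(4) uM pq unfolding N_def by blast
      show "\<Union>N \<inter> X0 = {}" using L1(5) uM pq X0s unfolding N_def by blast
      show "\<forall>e\<in>H \<union> T. e \<inter> (\<Union>N \<union> X0) \<noteq> {}"
      proof
        fix e assume e: "e \<in> H \<union> T"
        show "e \<inter> (\<Union>N \<union> X0) \<noteq> {}"
        proof (cases "e \<in> T")
          case True
          have "Xs t p' q' \<subseteq> \<Union>L" using L1(6) by blast
          hence "\<Union>M \<union> Xs t p' q' \<subseteq> \<Union>N \<union> X0" unfolding N_def by blast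
          moreover have "e \<inter> (\<Union>M \<union> Xs t p' q') \<noteq> {}" using M1(5) True by blast
          ultimately show ?thesis by blast
        next
          case False hence "e \<in> H - {f}" using e f(3) by blast
          have "Ys t p' q' \<subseteq> \<Union>M" using M1(3) by blast
          hence "\<Union>L \<union> Ys t p' q' \<union> X0 \<subseteq> \<Union>N \<union> X0" unfolding N_def by blast
          moreover have "e \<inter> (\<Union>L \<union> Ys t p' q' \<union> X0) \<noteq> {}" using L1(7) \<open>e \<in> H - {f}\<close> by blast
          ultimately show ?thesis by blast
        qed
      qed
    qed
    moreover have "\<phi> N = x"
    proof -
      have "N - T = L" "N \<inter> T = M" unfolding N_def using LT0 M1(1) by blast+
      moreover have "t = (p' \<in> \<Union>L, q' \<in> \<Union>L, p' \<in> \<Union>M, q' \<in> \<Union>M)"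
      proof -
        have "sel t1 t2 p' q' = \<Union>L \<inter> {p',q'}" using L1(6) t by simp
        hence a: "t1 = (p' \<in> \<Union>L) \<and> t2 = (q' \<in> \<Union>L)" by (simp only: sel_eq_int[OF f(4)])
        have "sel t3 t4 p' q' = \<Union>M \<inter> {p',q'}" using M1(3) t by simp
        hence b: "t3 = (p' \<in> \<Union>M) \<and> t4 = (q' \<in> \<Union>M)" by (simp only: sel_eq_int[OF f(4)])
        show ?thesis using a b t by simp
      qed
      ultimately show ?thesis unfolding \<phi>_def x by simp
    qed
    ultimately show ?thesis by blast
  qed
  have bij: "bij_betw \<phi> G S" unfolding bij_betw_def using inj img1 img2 by blast
  have finL: "finite (LT t)" for t
    by (rule finite_subset[of _ "Pow H"]) (auto simp: LT_def Loc_def fin)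
  have finG: "finite (GT t)" for t
    by (rule finite_subset[of _ "Pow T"]) (auto simp: GT_def Gs_def fin)
  have "card G = card S" using bij by (rule bij_betw_same_card)
  also have "\<dots> = (\<Sum>t\<in>set states. card (LT t \<times> GT t))"
    unfolding S_def by (rule card_SigmaI) (auto simp: finL finG)
  also have "\<dots> = (\<Sum>t\<in>set states. card (LT t) * card (GT t))"
    by (simp add: card_cartesian_product)
  also have "\<dots> = (\<Sum>t\<leftarrow>states. card (LT t) * card (GT t))"
    by (simp add: sum_list_distinct_conv_sum_set distinct_states)
  finally show ?thesis unfolding G_def LT_def GT_def X0_def Y0_def .
qed


definition suc6 :: "nat \<Rightarrow> nat" where "suc6 i = (if i = 5 then 0 else Suc i)"
definition pre6 :: "nat \<Rightarrow> nat" where "pre6 j = (if j = 0 then 5 else j - 1)"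
definition covb :: "bool list \<Rightarrow> nat \<Rightarrow> bool" where "covb bs j = (bs!j \<or> bs!(pre6 j))"
fun inX0 :: "st \<Rightarrow> nat \<Rightarrow> bool" where "inX0 (x1,x2,y1,y2) j = ((j=0 \<and> x1) \<or> (j=1 \<and> x2))"
fun inY0 :: "st \<Rightarrow> nat \<Rightarrow> bool" where "inY0 (x1,x2,y1,y2) j = ((j=0 \<and> y1) \<or> (j=1 \<and> y2))"
fun inX :: "nat \<Rightarrow> nat \<Rightarrow> st \<Rightarrow> nat \<Rightarrow> bool" where "inX m3 m2 (x1,x2,y1,y2) j = ((j=m3 \<and> x1) \<or> (j=m2 \<and> x2))"
fun inY :: "nat \<Rightarrow> nat \<Rightarrow> st \<Rightarrow> nat \<Rightarrow> bool" where "inY m3 m2 (x1,x2,y1,y2) j = ((j=m3 \<and> y1) \<or> (j=m2 \<and> y2))"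
definition locg :: "nat \<Rightarrow> nat \<Rightarrow> st \<Rightarrow> st \<Rightarrow> bool list \<Rightarrow> bool" where
"locg m2 m3 s t bs = (\<not> bs!m2
  \<and> list_all (\<lambda>i. \<not>(bs!i \<and> bs!(suc6 i))) [0..<6]
  \<and> list_all (\<lambda>j. \<not>(covb bs j \<and> inY m3 m2 t j)) [0..<6]
  \<and> list_all (\<lambda>j. (covb bs j \<and> (j=0 \<or> j=1)) = inY0 s j) [0..<6]
  \<and> list_all (\<lambda>j. \<not>(covb bs j \<and> inX0 s j)) [0..<6]
  \<and> list_all (\<lambda>j. (covb bs j \<and> (j=m3 \<or> j=m2)) = inX m3 m2 t j) [0..<6]
  \<and> list_all (\<lambda>i. i \<noteq> m2 \<longrightarrow> ((covb bs i \<or> inY m3 m2 t i \<or> inX0 s i) \<or> (covb bs (suc6 i) \<or> inY m3 m2 t (suc6 i) \<or> inX0 s (suc6 i)))) [0..<6])"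
definition locb :: "nat \<Rightarrow> st \<Rightarrow> st \<Rightarrow> bool list \<Rightarrow> bool" where
"locb d s t bs = locg (d+2) (d+3) s t bs"
definition Amat :: "nat \<Rightarrow> st \<Rightarrow> st \<Rightarrow> nat" where
"Amat d s t = length (filter (locb d s t) (List.n_lists 6 [False,True]))"

lemma list_all_upt: "list_all P [0..<n] \<longleftrightarrow> (\<forall>i<n. P i)" by (auto simp: list_all_iff)

lemma suc6_lt: "i < 6 \<Longrightarrow> suc6 i < 6" by (simp add: suc6_def)
lemma pre6_lt: "i < 6 \<Longrightarrow> pre6 i < 6" unfolding pre6_def by auto
lemma suc6_inj: "i < 6 \<Longrightarrow> j < 6 \<Longrightarrow> suc6 i = suc6 j \<Longrightarrow> i = j" by (auto simp: suc6_def split: if_splits)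
lemma suc6_neq: "suc6 i \<noteq> i" by (simp add: suc6_def)
lemma suc6_pre6: "i < 6 \<Longrightarrow> j < 6 \<Longrightarrow> (j = suc6 i) = (i = pre6 j)" by (auto simp: suc6_def pre6_def)
lemma suc6_suc6: "i < 6 \<Longrightarrow> suc6 (suc6 i) \<noteq> i" by (simp add: suc6_def)

locale hexv =
  fixes v :: "nat \<Rightarrow> nat"
  assumes vinj: "\<And>i j. i < 6 \<Longrightarrow> j < 6 \<Longrightarrow> v i = v j \<Longrightarrow> i = j"
begin

definition VS :: "(nat \<Rightarrow> bool) \<Rightarrow> nat set" where "VS P = v ` {j. j < 6 \<and> P j}"
definition hedge :: "nat \<Rightarrow> nat set" where "hedge i = {v i, v (suc6 i)}"
definition Ldec :: "bool list \<Rightarrow> nat set set" where "Ldec bs = hedge ` {i. i < 6 \<and> bs!i}"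

lemma VS_int: "VS P \<inter> VS Q = VS (\<lambda>j. P j \<and> Q j)"
  unfolding VS_def using vinj by blast
lemma VS_un: "VS P \<union> VS Q = VS (\<lambda>j. P j \<or> Q j)"
  unfolding VS_def by blast
lemma VS_empty: "VS P = {} \<longleftrightarrow> (\<forall>j<6. \<not> P j)"
  unfolding VS_def by blast
lemma VS_eq: "VS P = VS Q \<longleftrightarrow> (\<forall>j<6. P j = Q j)"
proof
  assume A: "VS P = VS Q"
  show "\<forall>j<6. P j = Q j"
  proof (intro allI impI)
    fix j assume j: "j < (6::nat)"
    have "P j \<longleftrightarrow> v j \<in> VS P" unfolding VS_def using vinj j by blast
    moreover have "Q j \<longleftrightarrow> v j \<in> VS Q" unfolding VS_def using vinj j by blast
    ultimately show "P j = Q j" using A by simp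
  qed
next
  assume "\<forall>j<6. P j = Q j" thus "VS P = VS Q" unfolding VS_def by auto
qed
lemma VS_sel: "m < 6 \<Longrightarrow> n < 6 \<Longrightarrow> sel x y (v m) (v n) = VS (\<lambda>j. (j = m \<and> x) \<or> (j = n \<and> y))"
  unfolding VS_def sel_def by auto
lemma VS_pair: "m < 6 \<Longrightarrow> n < 6 \<Longrightarrow> {v m, v n} = VS (\<lambda>j. j = m \<or> j = n)"
  unfolding VS_def by auto
lemma hedge_hit: "i < 6 \<Longrightarrow> hedge i \<inter> VS P \<noteq> {} \<longleftrightarrow> P i \<or> P (suc6 i)"
  unfolding VS_def hedge_def using vinj suc6_lt by blast

lemma Union_Ldec: "\<Union>(Ldec bs) = VS (covb bs)"
proof (rule set_eqI)
  fix x
  show "x \<in> \<Union>(Ldec bs) \<longleftrightarrow> x \<in> VS (covb bs)"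
  proof
    assume "x \<in> \<Union>(Ldec bs)"
    then obtain i where i: "i < 6" "bs!i" "x = v i \<or> x = v (suc6 i)"
      unfolding Ldec_def hedge_def by auto
    show "x \<in> VS (covb bs)"
    proof (cases "x = v i")
      case True thus ?thesis using i unfolding VS_def covb_def by auto
    next
      case False
      hence x: "x = v (suc6 i)" using i by auto
      have "pre6 (suc6 i) = i" using suc6_pre6[OF i(1) suc6_lt[OF i(1)]] by simp
      thus ?thesis using x i suc6_lt unfolding VS_def covb_def by auto
    qed
  next
    assume "x \<in> VS (covb bs)"
    then obtain j where j: "j < 6" "bs!j \<or> bs!(pre6 j)" "x = v j" unfolding VS_def covb_def by auto
    show "x \<in> \<Union>(Ldec bs)"
    proof (cases "bs!j")
      case True thus ?thesis using j unfolding Ldec_def hedge_def by auto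
    next
      case False
      hence b: "bs!(pre6 j)" using j by auto
      have "j = suc6 (pre6 j)" using suc6_pre6[OF pre6_lt[OF j(1)] j(1)] by simp
      hence "x \<in> hedge (pre6 j)" unfolding hedge_def using j by auto
      thus ?thesis using b pre6_lt[OF j(1)] unfolding Ldec_def by auto
    qed
  qed
qed

lemma hedge_inj: "i < 6 \<Longrightarrow> j < 6 \<Longrightarrow> hedge i = hedge j \<Longrightarrow> i = j"
proof -
  assume ij: "i < 6" "j < 6" "hedge i = hedge j"
  have "v i \<in> hedge j" using ij(3) unfolding hedge_def by auto
  hence a: "i = j \<or> i = suc6 j" unfolding hedge_def using vinj ij suc6_lt by blast
  have "v (suc6 i) \<in> hedge j" using ij(3) unfolding hedge_def by auto
  hence b: "suc6 i = j \<or> suc6 i = suc6 j" unfolding hedge_def using vinj ij suc6_lt by blast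
  show "i = j" using a b suc6_inj[OF ij(1,2)] suc6_suc6[OF ij(2)] by auto
qed

lemma hedge_meet: "i < 6 \<Longrightarrow> j < 6 \<Longrightarrow> hedge i \<inter> hedge j \<noteq> {} \<Longrightarrow> i = j \<or> j = suc6 i \<or> i = suc6 j"
proof -
  assume ij: "i < 6" "j < 6" "hedge i \<inter> hedge j \<noteq> {}"
  then obtain x where "x \<in> hedge i" "x \<in> hedge j" by blast
  hence "(v i = v j \<or> v i = v (suc6 j)) \<or> (v (suc6 i) = v j \<or> v (suc6 i) = v (suc6 j))"
    unfolding hedge_def by auto
  thus ?thesis using vinj ij suc6_lt suc6_inj by metis
qed

lemma matching_Ldec: "matching (Ldec bs) \<longleftrightarrow> (\<forall>i<6. \<not>(bs!i \<and> bs!(suc6 i)))"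
proof
  assume m: "matching (Ldec bs)"
  show "\<forall>i<6. \<not>(bs!i \<and> bs!(suc6 i))"
  proof (intro allI impI notI)
    fix i assume i: "i < (6::nat)" "bs!i \<and> bs!(suc6 i)"
    have in1: "hedge i \<in> Ldec bs" "hedge (suc6 i) \<in> Ldec bs" using i suc6_lt unfolding Ldec_def by auto
    have "hedge i \<noteq> hedge (suc6 i)" using hedge_inj[OF i(1) suc6_lt[OF i(1)]] suc6_neq by metis
    moreover have "v (suc6 i) \<in> hedge i \<inter> hedge (suc6 i)" unfolding hedge_def by auto
    ultimately show False using m in1 unfolding matching_def by blast
  qed
next
  assume A: "\<forall>i<6. \<not>(bs!i \<and> bs!(suc6 i))"
  show "matching (Ldec bs)" unfolding matching_def
  proof (intro ballI impI)
    fix e f assume e: "e \<in> Ldec bs" and f: "f \<in> Ldec bs" and ne: "e \<noteq> f"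
    obtain i where i: "i < 6" "bs!i" "e = hedge i" using e unfolding Ldec_def by auto
    obtain j where j: "j < 6" "bs!j" "f = hedge j" using f unfolding Ldec_def by auto
    show "e \<inter> f = {}"
    proof (rule ccontr)
      assume "e \<inter> f \<noteq> {}"
      hence "i = j \<or> j = suc6 i \<or> i = suc6 j" using hedge_meet i j by blast
      thus False using A i j ne by auto
    qed
  qed
qed

lemma Ldec_sub: "m < 6 \<Longrightarrow> Ldec bs \<subseteq> hedge ` {..<6} - {hedge m} \<longleftrightarrow> \<not> bs!m"
proof
  assume m: "m < 6" and s: "Ldec bs \<subseteq> hedge ` {..<6} - {hedge m}"
  show "\<not> bs!m"
  proof
    assume "bs!m" hence "hedge m \<in> Ldec bs" using m unfolding Ldec_def by auto
    thus False using s by blast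
  qed
next
  assume m: "m < 6" and b: "\<not> bs!m"
  show "Ldec bs \<subseteq> hedge ` {..<6} - {hedge m}"
  proof
    fix e assume "e \<in> Ldec bs"
    then obtain i where i: "i < 6" "bs!i" "e = hedge i" unfolding Ldec_def by auto
    have "i \<noteq> m" using i b by auto
    hence "hedge i \<noteq> hedge m" using hedge_inj i m by blast
    thus "e \<in> hedge ` {..<6} - {hedge m}" using i by auto
  qed
qed

lemma hits_minus: "m < 6 \<Longrightarrow> (\<forall>e\<in>hedge ` {..<6} - {hedge m}. e \<inter> Z \<noteq> {}) \<longleftrightarrow> (\<forall>i<6. i \<noteq> m \<longrightarrow> hedge i \<inter> Z \<noteq> {})"
  using hedge_inj by auto

lemma Ldec_surj: "L \<subseteq> hedge ` {..<6} \<Longrightarrow> L = Ldec (map (\<lambda>i. hedge i \<in> L) [0..<6])"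
  unfolding Ldec_def by auto

lemma Ldec_inj: "length bs = 6 \<Longrightarrow> length bs' = 6 \<Longrightarrow> Ldec bs = Ldec bs' \<Longrightarrow> bs = bs'"
proof -
  assume l: "length bs = 6" "length bs' = 6" and e: "Ldec bs = Ldec bs'"
  have mem: "hedge i \<in> Ldec cs \<longleftrightarrow> cs!i" if "i < 6" for i cs
    unfolding Ldec_def using hedge_inj that by auto
  show "bs = bs'"
  proof (rule nth_equalityI)
    show "length bs = length bs'" using l by simp
    fix i assume "i < length bs"
    hence "i < 6" using l by simp
    thus "bs!i = bs'!i" using mem[of i bs] mem[of i bs'] e by simp
  qed
qed


lemma Loc_Ldec_gen:
  assumes lt: "m2 < 6" "m3 < 6"
  shows "Ldec bs \<in> Loc (hedge ` {..<6}) (hedge m2) (v 0) (v 1) (v m3) (v m2)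
     (Xs s (v 0) (v 1)) (Ys s (v 0) (v 1)) (Xs t (v m3) (v m2)) (Ys t (v m3) (v m2))
     \<longleftrightarrow> locg m2 m3 s t bs"
proof -
  obtain x1 x2 y1 y2 where s: "s = (x1,x2,y1,y2)" by (cases s) auto
  obtain u1 u2 w1 w2 where t: "t = (u1,u2,w1,w2)" by (cases t) auto
  show ?thesis
    unfolding Loc_def mem_Collect_eq s t Xs.simps Ys.simps Union_Ldec
    by (simp add: VS_sel VS_pair lt Ldec_sub matching_Ldec hits_minus VS_int VS_un VS_empty VS_eq
        hedge_hit locg_def list_all_upt)
qed

lemma Loc_Ldec:
  assumes d: "d \<le> 2"
  shows "Ldec bs \<in> Loc (hedge ` {..<6}) (hedge (d+2)) (v 0) (v 1) (v (d+3)) (v (d+2))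
     (Xs s (v 0) (v 1)) (Ys s (v 0) (v 1)) (Xs t (v (d+3)) (v (d+2))) (Ys t (v (d+3)) (v (d+2)))
     \<longleftrightarrow> locb d s t bs"
  unfolding locb_def by (rule Loc_Ldec_gen) (use d in auto)

lemma Loc_card:
  assumes d: "d \<le> 2"
  shows "card (Loc (hedge ` {..<6}) (hedge (d+2)) (v 0) (v 1) (v (d+3)) (v (d+2))
     (Xs s (v 0) (v 1)) (Ys s (v 0) (v 1)) (Xs t (v (d+3)) (v (d+2))) (Ys t (v (d+3)) (v (d+2))))
     = Amat d s t"
proof -
  define Lc where "Lc = Loc (hedge ` {..<6}) (hedge (d+2)) (v 0) (v 1) (v (d+3)) (v (d+2))
     (Xs s (v 0) (v 1)) (Ys s (v 0) (v 1)) (Xs t (v (d+3)) (v (d+2))) (Ys t (v (d+3)) (v (d+2)))"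
  define B where "B = {bs \<in> set (List.n_lists 6 [False,True]). locb d s t bs}"
  have LB: "Lc = Ldec ` B"
  proof
    show "Lc \<subseteq> Ldec ` B"
    proof
      fix L assume L: "L \<in> Lc"
      hence "L \<subseteq> hedge ` {..<6}" unfolding Lc_def Loc_def by auto
      hence eq: "L = Ldec (map (\<lambda>i. hedge i \<in> L) [0..<6])" by (rule Ldec_surj)
      define bs0 where "bs0 = map (\<lambda>i. hedge i \<in> L) [0..<6]"
      have bsL: "Ldec bs0 \<in> Lc" using L eq unfolding bs0_def by simp
      have iff: "Ldec bs0 \<in> Lc \<longleftrightarrow> locb d s t bs0" unfolding Lc_def by (rule Loc_Ldec[OF d])
      have "bs0 \<in> B" unfolding B_def set_n_lists using bsL iff by (auto simp: bs0_def)
      hence "map (\<lambda>i. hedge i \<in> L) [0..<6] \<in> B" unfolding bs0_def .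
      thus "L \<in> Ldec ` B" using eq by blast
    qed
  next
    show "Ldec ` B \<subseteq> Lc"
    proof
      fix L assume "L \<in> Ldec ` B"
      then obtain bs where bs: "bs \<in> B" "L = Ldec bs" by blast
      have iff: "Ldec bs \<in> Lc \<longleftrightarrow> locb d s t bs" unfolding Lc_def by (rule Loc_Ldec[OF d])
      show "L \<in> Lc" using bs iff unfolding B_def by auto
    qed
  qed
  have inj: "inj_on Ldec B"
    by (rule inj_onI) (auto simp: B_def set_n_lists intro: Ldec_inj)
  have "card Lc = card B" using LB inj by (simp add: card_image)
  also have "B = set (filter (locb d s t) (List.n_lists 6 [False,True]))" unfolding B_def by auto
  also have "card \<dots> = length (filter (locb d s t) (List.n_lists 6 [False,True]))"
    by (rule distinct_card) (simp add: distinct_n_lists)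
  finally show ?thesis unfolding Lc_def Amat_def .
qed

end


definition hv :: "nat \<Rightarrow> nat \<Rightarrow> nat \<Rightarrow> nat \<Rightarrow> nat" where
  "hv a b k j = (if j = 0 then a else if j = 1 then b else k + (j - 2))"

lemma hv_hexv: "a \<noteq> b \<Longrightarrow> a < k \<Longrightarrow> b < k \<Longrightarrow> hexv (hv a b k)"
  unfolding hexv_def hv_def by (auto split: if_splits)

lemma lt6: "{..<6::nat} = {0,1,2,3,4,5}" by auto

lemma hex_hedge: "a \<noteq> b \<Longrightarrow> a < k \<Longrightarrow> b < k \<Longrightarrow> hex a b k = hexv.hedge (hv a b k) ` {..<6}"
  unfolding lt6 by (simp add: hex_def hexv.hedge_def[OF hv_hexv] hv_def suc6_def insert_commute)

lemma exit_facts: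
  assumes "d \<le> 2" "exit_edge d k = (a',b')" and ab: "a \<noteq> b" "a < k" "b < k"
  shows "k \<le> a' \<and> a' \<le> k+3 \<and> k \<le> b' \<and> b' \<le> k+3 \<and> a' \<noteq> b' \<and>
         a' = hv a b k (d+3) \<and> b' = hv a b k (d+2) \<and> {a',b'} = hexv.hedge (hv a b k) (d+2)"
proof -
  have "d = 0 \<or> d = 1 \<or> d = 2" using assms(1) by auto
  thus ?thesis using assms(2) by (auto simp: hv_def hexv.hedge_def[OF hv_hexv[OF ab]] suc6_def)
qed

lemma loc_card_hex:
  assumes ab: "a \<noteq> b" "a < k" "b < k" and d: "d \<le> 2" and ex: "exit_edge d k = (a',b')"
  shows "card (Loc (hex a b k) {a',b'} a b a' b' (Xs s a b) (Ys s a b) (Xs t a' b') (Ys t a' b')) = Amat d s t"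
proof -
  interpret hexv "hv a b k" by (rule hv_hexv[OF ab])
  have e: "a' = hv a b k (d+3)" "b' = hv a b k (d+2)" "{a',b'} = hedge (d+2)"
    using exit_facts[OF d ex ab] by auto
  have v01: "hv a b k 0 = a" "hv a b k 1 = b" by (simp_all add: hv_def)
  show ?thesis using Loc_card[OF d, of s t] unfolding e(3) hex_hedge[OF ab] v01 e(1,2)[symmetric]
    by simp
qed

definition single :: "st \<Rightarrow> nat" where
  "single t = (case t of (x1,x2,y1,y2) \<Rightarrow> (if \<not>y1 \<and> \<not>y2 \<and> (x1 \<or> x2) then 1 else 0) + (if y1 \<and> y2 \<and> \<not>x1 \<and> \<not>x2 then 1 else 0))"

lemma card_single:
  assumes pq: "p \<noteq> q"
  shows "card (Gs {{p,q}} p q (Xs t p q) (Ys t p q)) = single t"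
proof -
  obtain x1 x2 y1 y2 where t: "t = (x1,x2,y1,y2)" by (cases t) auto
  have "Gs {{p,q}} p q (Xs t p q) (Ys t p q) =
     {M. M = {} \<and> (\<not>y1 \<and> \<not>y2 \<and> (x1 \<or> x2))} \<union> {M. M = {{p,q}} \<and> (y1 \<and> y2 \<and> \<not>x1 \<and> \<not>x2)}"
    unfolding t Gs_def Xs.simps Ys.simps using pq
    by (auto simp: sel_def matching_def subset_singleton_iff)
  thus ?thesis unfolding t single_def by (cases x1; cases x2; cases y1; cases y2) auto
qed

fun vec :: "nat list \<Rightarrow> st \<Rightarrow> nat" where
  "vec [] s = (\<Sum>t\<leftarrow>states. Amat 1 s t * single t)"
| "vec (d # ds) s = (\<Sum>t\<leftarrow>states. Amat d s t * vec ds t)"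

lemma hexchain_vert: "\<forall>e\<in>hexchain a b k ds. e \<subseteq> {a,b} \<union> {x. k \<le> x}"
proof (induction ds arbitrary: a b k)
  case Nil thus ?case by (auto simp: hex_def)
next
  case (Cons d ds)
  obtain a' b' where ex: "exit_edge d k = (a',b')" by (cases "exit_edge d k") auto
  have ab': "k \<le> a' \<and> k \<le> b'" using ex by (auto split: if_splits)
  have t: "x \<in> {a,b} \<union> {x. k \<le> x}" if "e \<in> hexchain a' b' (k+4) ds" "x \<in> e" for e x
  proof -
    have "x \<in> {a',b'} \<union> {x. k+4 \<le> x}" using Cons.IH[of a' b' "k+4"] that by blast
    thus ?thesis using ab' by auto
  qed
  have hc: "hexchain a b k (d#ds) = hex a b k \<union> hexchain a' b' (k+4) ds" using ex by simp
  show ?case unfolding hc using t by (auto simp: hex_def)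
qed

lemma hexchain_fin: "finite (hexchain a b k ds)"
proof (induction ds arbitrary: a b k)
  case Nil thus ?case by (simp add: hex_def)
next
  case (Cons d ds) thus ?case by (simp add: hex_def split: prod.split)
qed

lemma hexchain_has: "{a,b} \<in> hexchain a b k ds"
  by (cases ds) (auto simp: hex_def)

lemma hexchain_ne: "\<forall>e\<in>hexchain a b k ds. e \<noteq> {}"
proof (induction ds arbitrary: a b k)
  case Nil thus ?case by (auto simp: hex_def)
next
  case (Cons d ds) thus ?case by (auto simp: hex_def split: prod.splits)
qed

lemma dbl: "x \<noteq> y \<Longrightarrow> {x,y} \<subseteq> {u,w} \<Longrightarrow> {x,y} = {u::nat,w}" by blast

lemma hex_edge_eq:
  assumes "a \<noteq> b" "a < k" "b < k" "e \<in> hex a b k" "e \<subseteq> {u,w}"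
  shows "e = {u,w}"
proof -
  have "e = {a,b} \<or> e = {b,k} \<or> e = {k,k+1} \<or> e = {k+1,k+2} \<or> e = {k+2,k+3} \<or> e = {k+3,a}"
    using assms(4) by (simp add: hex_def)
  moreover have "a \<noteq> b" "b \<noteq> k" "k \<noteq> k+1" "k+1 \<noteq> k+2" "k+2 \<noteq> k+3" "k+3 \<noteq> a" using assms by auto
  ultimately show ?thesis using assms(5) dbl by metis
qed

lemma decomp_hex:
  assumes ab: "a \<noteq> b" "a < k" "b < k" and d: "d \<le> 2" and ex: "exit_edge d k = (a',b')"
  and fin: "finite T" and fT: "{a',b'} \<in> T" and TV: "\<forall>e\<in>T. e \<subseteq> {a',b'} \<union> {x. k+4 \<le> x}"
  shows "card (Gs (hex a b k \<union> T) a b (Xs s a b) (Ys s a b)) =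
    (\<Sum>t\<leftarrow>states. Amat d s t * card (Gs T a' b' (Xs t a' b') (Ys t a' b')))"
proof -
  have ef: "k \<le> a' \<and> a' \<le> k+3 \<and> k \<le> b' \<and> b' \<le> k+3 \<and> a' \<noteq> b' \<and> {a',b'} = hexv.hedge (hv a b k) (d+2)"
    using exit_facts[OF d ex ab] by auto
  have d6: "d+2 \<in> {..<6}" using d by simp
  have fH: "{a',b'} \<in> hex a b k" unfolding hex_hedge[OF ab] using ef imageI[OF d6, of "hexv.hedge (hv a b k)"]
    by simp
  define VH where "VH = {a,b,k,k+1,k+2,k+3}"
  define VT where "VT = {a',b'} \<union> {x. k+4 \<le> x}"
  have HV: "\<forall>e\<in>hex a b k. e \<subseteq> VH" unfolding VH_def hex_def by auto
  have ar: "k \<le> a'" "a' \<le> k+3" "k \<le> b'" "b' \<le> k+3" using ef by auto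
  have a4: "a' = k \<or> a' = k+1 \<or> a' = k+2 \<or> a' = k+3" using ar(1,2) by presburger
  have b4: "b' = k \<or> b' = k+1 \<or> b' = k+2 \<or> b' = k+3" using ar(3,4) by presburger
  have "a' \<in> VH" "b' \<in> VH" unfolding VH_def using a4 b4 by blast+
  moreover have "a' \<in> VT" "b' \<in> VT" unfolding VT_def by blast+
  moreover have "x \<in> {a',b'}" if "x \<in> VH" "x \<in> VT" for x
  proof -
    have "x \<notin> {x. k+4 \<le> x}" using that(1) ab unfolding VH_def by auto
    thus ?thesis using that(2) unfolding VT_def by blast
  qed
  ultimately have VHT: "VH \<inter> VT = {a',b'}" by blast
  have pq: "a \<notin> VT" "b \<notin> VT" unfolding VT_def using ar ab by auto
  have HT: "hex a b k \<inter> T = {{a',b'}}"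
  proof
    show "{{a',b'}} \<subseteq> hex a b k \<inter> T" using fH fT by auto
    show "hex a b k \<inter> T \<subseteq> {{a',b'}}"
    proof
      fix e assume e: "e \<in> hex a b k \<inter> T"
      have "e \<subseteq> VH \<inter> VT" using e HV TV unfolding VT_def by blast
      hence "e \<subseteq> {a',b'}" using VHT by simp
      thus "e \<in> {{a',b'}}" using hex_edge_eq[OF ab] e by blast
    qed
  qed
  have "card (Gs (hex a b k \<union> T) a b (Xs s a b) (Ys s a b)) =
    (\<Sum>t\<leftarrow>states. card (Loc (hex a b k) {a',b'} a b a' b' (Xs s a b) (Ys s a b) (Xs t a' b') (Ys t a' b'))
                  * card (Gs T a' b' (Xs t a' b') (Ys t a' b')))"
    by (rule decomp[OF _ fin refl fH fT _ HV _ VHT pq HT]) (use ef TV in \<open>auto simp: hex_def VT_def\<close>)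
  also have "\<dots> = (\<Sum>t\<leftarrow>states. Amat d s t * card (Gs T a' b' (Xs t a' b') (Ys t a' b')))"
    using loc_card_hex[OF ab d ex] by simp
  finally show ?thesis .
qed

lemma chain_card:
  "\<forall>d\<in>set ds. d \<le> 2 \<Longrightarrow> a \<noteq> b \<Longrightarrow> a < k \<Longrightarrow> b < k \<Longrightarrow>
   card (Gs (hexchain a b k ds) a b (Xs s a b) (Ys s a b)) = vec ds s"
proof (induction ds arbitrary: a b k s)
  case Nil
  obtain a' b' where ex: "exit_edge 1 k = (a',b')" by (cases "exit_edge 1 k") auto
  have ef: "a' = k+2" "b' = k+1" using ex by auto
  have "hexchain a b k [] = hex a b k \<union> {{a',b'}}" unfolding ef by (auto simp: hex_def)
  hence "card (Gs (hexchain a b k []) a b (Xs s a b) (Ys s a b)) =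
      (\<Sum>t\<leftarrow>states. Amat 1 s t * card (Gs {{a',b'}} a' b' (Xs t a' b') (Ys t a' b')))"
    using decomp_hex[OF Nil.prems(2,3,4) _ ex, of "{{a',b'}}" s] by auto
  also have "\<dots> = vec [] s" using card_single[of a' b'] ef by simp
  finally show ?case .
next
  case (Cons d ds)
  obtain a' b' where ex: "exit_edge d k = (a',b')" by (cases "exit_edge d k") auto
  have d: "d \<le> 2" using Cons.prems by simp
  have ef: "k \<le> a' \<and> a' \<le> k+3 \<and> k \<le> b' \<and> b' \<le> k+3 \<and> a' \<noteq> b'"
    using exit_facts[OF d ex Cons.prems(2,3,4)] by auto
  have hc: "hexchain a b k (d#ds) = hex a b k \<union> hexchain a' b' (k+4) ds" using ex by simp
  have "card (Gs (hexchain a b k (d#ds)) a b (Xs s a b) (Ys s a b)) =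
      (\<Sum>t\<leftarrow>states. Amat d s t * card (Gs (hexchain a' b' (k+4) ds) a' b' (Xs t a' b') (Ys t a' b')))"
    unfolding hc by (rule decomp_hex[OF Cons.prems(2,3,4) d ex hexchain_fin hexchain_has hexchain_vert])
  also have "\<dots> = (\<Sum>t\<leftarrow>states. Amat d s t * vec ds t)"
    using Cons.IH[of a' b' "k+4"] Cons.prems ef by simp
  finally show ?case by simp
qed

lemma Psi_chain:
  assumes ds: "\<forall>d\<in>set ds. d \<le> 2"
  shows "Psi (benz_chain ds) = vec ds (False,False,False,False) + vec ds (False,False,False,True)
       + vec ds (False,False,True,False) + vec ds (False,False,True,True)"
proof -
  define E where "E = hexchain 0 1 2 ds"
  define g where "g y1 y2 = Gs E 0 1 (Xs (False,False,y1,y2) 0 1) (Ys (False,False,y1,y2) 0 1)" for y1 y2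
  have cg: "card (g y1 y2) = vec ds (False,False,y1,y2)" for y1 y2
    unfolding g_def E_def by (rule chain_card[OF ds]) auto
  have fin: "finite (g y1 y2)" for y1 y2
    by (rule finite_subset[of _ "Pow E"]) (auto simp: g_def Gs_def E_def hexchain_fin)
  have gm: "M \<in> g y1 y2 \<longleftrightarrow> (M \<subseteq> E \<and> matching M \<and> (\<forall>e\<in>E. e \<inter> \<Union>M \<noteq> {}) \<and> \<Union>M \<inter> {0,1} = sel y1 y2 0 1)" for M y1 y2
    by (auto simp: g_def Gs_def sel_def)
  have selinj: "sel y1 y2 0 1 = sel z1 z2 (0::nat) 1 \<Longrightarrow> (y1,y2) = (z1,z2)" for y1 y2 z1 z2
    by (cases y1; cases y2; cases z1; cases z2) (auto simp: sel_def)
  have A: "{M. maximal_matching E M} = ((g False False \<union> g False True) \<union> g True False) \<union> g True True"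
  proof (rule set_eqI)
    fix M
    have "M \<in> {M. maximal_matching E M} \<longleftrightarrow> M \<in> g (0 \<in> \<Union>M) (1 \<in> \<Union>M)"
      unfolding mem_Collect_eq maximal_matching_iff[OF hexchain_ne[of 0 1 2 ds, folded E_def]] gm sel_int by simp
    also have "\<dots> \<longleftrightarrow> M \<in> ((g False False \<union> g False True) \<union> g True False) \<union> g True True"
    proof
      assume "M \<in> g (0 \<in> \<Union>M) (1 \<in> \<Union>M)"
      thus "M \<in> ((g False False \<union> g False True) \<union> g True False) \<union> g True True"
        by (cases "0 \<in> \<Union>M"; cases "1 \<in> \<Union>M") simp_all
    next
      assume "M \<in> ((g False False \<union> g False True) \<union> g True False) \<union> g True True"
      then obtain y1 y2 where y: "M \<in> g y1 y2" by blast
      hence "\<Union>M \<inter> {0,1} = sel y1 y2 0 1" using gm by blast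
      hence "sel (0 \<in> \<Union>M) (1 \<in> \<Union>M) 0 1 = sel y1 y2 0 1" by (subst sel_int) assumption
      hence "(0 \<in> \<Union>M, 1 \<in> \<Union>M) = (y1, y2)" by (rule selinj)
      thus "M \<in> g (0 \<in> \<Union>M) (1 \<in> \<Union>M)" using y by simp
    qed
    finally show "M \<in> {M. maximal_matching E M} \<longleftrightarrow> M \<in> ((g False False \<union> g False True) \<union> g True False) \<union> g True True" .
  qed
  have dis: "g y1 y2 \<inter> g z1 z2 = {}" if "(y1,y2) \<noteq> (z1,z2)" for y1 y2 z1 z2
  proof -
    have "M \<notin> g z1 z2" if "M \<in> g y1 y2" for M
    proof
      assume "M \<in> g z1 z2"
      hence "sel y1 y2 0 1 = sel z1 z2 0 1" using gm \<open>M \<in> g y1 y2\<close> by metis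
      thus False using selinj \<open>(y1,y2) \<noteq> (z1,z2)\<close> by blast
    qed
    thus ?thesis by blast
  qed
  have "Psi (benz_chain ds) = card {M. maximal_matching E M}"
    unfolding Psi_def benz_chain_def E_def ..
  also have "\<dots> = card (g False False) + card (g False True) + card (g True False) + card (g True True)"
    unfolding A using fin dis by (simp add: card_Un_disjoint Int_Un_distrib2)
  finally show ?thesis unfolding cg .
qed


lemma sum_states: "(\<Sum>t\<leftarrow>states. f t) = sum f UNIV"
proof -
  have "set states = UNIV" using in_states by blast
  thus ?thesis using sum_list_distinct_conv_sum_set[OF distinct_states, of f] by simp
qed

lemma rec_gen:
  fixes u :: "nat \<Rightarrow> st \<Rightarrow> nat"
  assumes step: "\<And>m s. u (Suc m) s = (\<Sum>t\<leftarrow>states. K s t * u m (\<sigma> t))"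
  and base: "\<And>s. u p s = (\<Sum>i<p. c i * u i s)"
  shows "u (m + p) s = (\<Sum>i<p. c i * u (m + i) s)"
proof (induction m arbitrary: s)
  case 0 show ?case using base by simp
next
  case (Suc m)
  have "u (Suc m + p) s = (\<Sum>t\<leftarrow>states. K s t * u (m+p) (\<sigma> t))" using step[of "m+p" s] by simp
  also have "\<dots> = (\<Sum>t\<leftarrow>states. K s t * (\<Sum>i<p. c i * u (m+i) (\<sigma> t)))" using Suc.IH by simp
  also have "\<dots> = (\<Sum>t\<in>UNIV. \<Sum>i<p. c i * (K s t * u (m+i) (\<sigma> t)))"
    unfolding sum_states by (simp add: sum_distrib_left mult.left_commute)
  also have "\<dots> = (\<Sum>i<p. \<Sum>t\<in>UNIV. c i * (K s t * u (m+i) (\<sigma> t)))" by (rule sum.swap)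
  also have "\<dots> = (\<Sum>i<p. c i * (\<Sum>t\<leftarrow>states. K s t * u (m+i) (\<sigma> t)))"
    unfolding sum_states by (simp add: sum_distrib_left)
  also have "\<dots> = (\<Sum>i<p. c i * u (Suc m + i) s)" using step by simp
  finally show ?case .
qed

fun Pw :: "st \<Rightarrow> st" where "Pw (x1,x2,y1,y2) = (x2,x1,y2,y1)"

lemma Pw_Pw: "Pw (Pw s) = s" by (cases s) auto

lemma sum_states_Pw: "(\<Sum>t\<leftarrow>states. g (Pw t)) = (\<Sum>t\<leftarrow>states. (g t :: nat))"
proof -
  have inj: "inj Pw" by (metis Pw_Pw injI)
  have surj: "Pw ` UNIV = UNIV" by (metis Pw_Pw surj_def)
  have "sum g UNIV = sum g (Pw ` UNIV)" using surj by simp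
  also have "\<dots> = sum (g \<circ> Pw) UNIV" by (rule sum.reindex[OF inj])
  finally show ?thesis unfolding sum_states by simp
qed

lemma vec_sw:
  assumes sym: "\<And>s t. Amat 2 s t = Amat 0 (Pw s) (Pw t)"
  and base: "\<And>s. vec [] s = vec [] (Pw s)"
  shows "\<forall>d\<in>set ds. d = 0 \<or> d = 2 \<Longrightarrow> vec (map (\<lambda>d. 2 - d) ds) s = vec ds (Pw s)"
proof (induction ds arbitrary: s)
  case Nil thus ?case using base by simp
next
  case (Cons d ds)
  have sym': "Amat (2 - d) s t = Amat d (Pw s) (Pw t)" for s t
  proof -
    have "d = 0 \<or> d = 2" using Cons.prems by simp
    thus ?thesis using sym[of s t] sym[of "Pw s" "Pw t"] by (auto simp: Pw_Pw)
  qed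
  have "vec (map (\<lambda>d. 2 - d) (d # ds)) s = (\<Sum>t\<leftarrow>states. Amat (2 - d) s t * vec (map (\<lambda>d. 2 - d) ds) t)"
    by simp
  also have "\<dots> = (\<Sum>t\<leftarrow>states. Amat d (Pw s) (Pw t) * vec ds (Pw t))"
    using Cons.IH Cons.prems sym' by simp
  also have "\<dots> = (\<Sum>t\<leftarrow>states. Amat d (Pw s) t * vec ds t)"
    by (rule sum_states_Pw[where g = "\<lambda>t. Amat d (Pw s) t * vec ds t"])
  finally show ?case by simp
qed

definition zl :: "nat \<Rightarrow> nat list" where "zl m = map (\<lambda>i. if even i then 0 else 2) [0..<m]"

lemma zl_Suc: "zl (Suc m) = 0 # map (\<lambda>d. 2 - d) (zl m)"
proof -
  have "[0..<Suc m] = 0 # map Suc [0..<m]" by (simp add: map_Suc_upt upt_conv_Cons)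
  thus ?thesis by (simp add: zl_def)
qed

lemma zl_set: "\<forall>d\<in>set (zl m). d = 0 \<or> d = 2" by (auto simp: zl_def)


lemma tab0: "map (\<lambda>s. map (Amat 0 s) states) states = [[0,0,0,0,0,0,0,0,0,0,0,0,0,0,0,0], [0,0,0,0,1,0,1,0,0,0,0,0,0,0,0,0], [0,0,0,1,0,0,0,0,0,1,0,0,0,0,0,0], [1,1,1,1,0,0,1,0,1,1,0,0,1,0,0,0], [1,1,1,1,0,0,0,0,0,0,0,0,0,0,0,0], [0,0,0,0,0,0,0,0,0,0,0,0,0,0,0,0], [0,0,1,1,0,0,0,0,1,1,0,0,0,0,0,0], [0,0,0,0,0,0,0,0,0,0,0,0,0,0,0,0], [0,1,0,1,0,0,0,0,0,1,0,0,0,0,0,0], [0,0,0,0,1,0,1,0,0,0,0,0,1,0,0,0], [0,0,0,0,0,0,0,0,0,0,0,0,0,0,0,0], [0,0,0,0,0,0,0,0,0,0,0,0,0,0,0,0], [1,1,1,1,0,0,0,0,1,1,0,0,0,0,0,0], [0,0,0,0,0,0,0,0,0,0,0,0,0,0,0,0], [0,0,0,0,0,0,0,0,0,0,0,0,0,0,0,0], [0,0,0,0,0,0,0,0,0,0,0,0,0,0,0,0]]"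
  by code_simp

lemmas A0 = tab0[unfolded states_def, simplified]

lemma tab1: "map (\<lambda>s. map (Amat 1 s) states) states = [[0,0,0,0,0,0,0,0,0,0,0,0,0,0,0,0], [0,0,0,0,0,0,0,0,1,1,0,0,0,0,0,0], [0,0,0,0,1,0,1,0,0,0,0,0,0,0,0,0], [1,1,1,2,0,0,1,0,0,1,0,0,1,0,0,0], [0,0,0,0,0,0,0,0,0,1,0,0,1,0,0,0], [0,0,0,0,0,0,0,0,0,0,0,0,0,0,0,0], [0,1,0,1,1,0,1,0,0,0,0,0,0,0,0,0], [0,0,0,0,0,0,0,0,0,0,0,0,0,0,0,0], [0,0,0,0,0,0,1,0,0,0,0,0,1,0,0,0], [0,0,1,1,0,0,0,0,1,1,0,0,0,0,0,0], [0,0,0,0,0,0,0,0,0,0,0,0,0,0,0,0], [0,0,0,0,0,0,0,0,0,0,0,0,0,0,0,0], [0,0,0,1,0,0,1,0,0,1,0,0,1,0,0,0], [0,0,0,0,0,0,0,0,0,0,0,0,0,0,0,0], [0,0,0,0,0,0,0,0,0,0,0,0,0,0,0,0], [0,0,0,0,0,0,0,0,0,0,0,0,0,0,0,0]]"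
  by code_simp

lemmas A1 = tab1[unfolded states_def, simplified]

lemma tab2: "map (\<lambda>s. map (Amat 2 s) states) states = [[0,0,0,0,0,0,0,0,0,0,0,0,0,0,0,0], [0,0,0,1,0,0,1,0,0,0,0,0,0,0,0,0], [0,0,0,0,0,0,0,0,1,1,0,0,0,0,0,0], [1,1,1,1,1,0,1,0,0,1,0,0,1,0,0,0], [0,0,1,1,0,0,1,0,0,0,0,0,0,0,0,0], [0,0,0,0,0,0,0,0,0,0,0,0,0,0,0,0], [0,0,0,0,0,0,0,0,1,1,0,0,1,0,0,0], [0,0,0,0,0,0,0,0,0,0,0,0,0,0,0,0], [1,1,1,1,0,0,0,0,0,0,0,0,0,0,0,0], [0,1,0,1,1,0,1,0,0,0,0,0,0,0,0,0], [0,0,0,0,0,0,0,0,0,0,0,0,0,0,0,0], [0,0,0,0,0,0,0,0,0,0,0,0,0,0,0,0], [1,1,1,1,1,0,1,0,0,0,0,0,0,0,0,0], [0,0,0,0,0,0,0,0,0,0,0,0,0,0,0,0], [0,0,0,0,0,0,0,0,0,0,0,0,0,0,0,0], [0,0,0,0,0,0,0,0,0,0,0,0,0,0,0,0]]"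
  by code_simp

lemmas A2 = tab2[unfolded states_def, simplified]

lemma sym02_all: "\<forall>s\<in>set states. \<forall>t\<in>set states. Amat 2 s t = Amat 0 (Pw s) (Pw t)"
  by (simp add: states_def A0 A2)
lemma sym02: "Amat 2 s t = Amat 0 (Pw s) (Pw t)" using sym02_all in_states by blast

lemma V0: "map (vec []) states = [0, 1, 1, 3, 1, 0, 2, 0, 1, 2, 0, 0, 2, 0, 0, 0]"
  by (simp add: states_def single_def A1)


lemma V0s: "vec [] (False,False,False,False) = 0 \<and> vec [] (False,False,False,True) = 1 \<and> vec [] (False,False,True,False) = 1 \<and> vec [] (False,False,True,True) = 3 \<and> vec [] (False,True,False,False) = 1 \<and> vec [] (False,True,False,True) = 0 \<and> vec [] (False,True,True,False) = 2 \<and> vec [] (False,True,True,True) = 0 \<and> vec [] (True,False,False,False) = 1 \<and> vec [] (True,False,False,True) = 2 \<and> vec [] (True,False,True,False) = 0 \<and> vec [] (True,False,True,True) = 0 \<and> vec [] (True,True,False,False) = 2 \<and> vec [] (True,True,False,True) = 0 \<and> vec [] (True,True,True,False) = 0 \<and> vec [] (True,True,True,True) = 0"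
  using V0 unfolding states_def by (simp del: vec.simps)

lemma base_sym_all: "\<forall>s\<in>set states. vec [] s = vec [] (Pw s)" by (simp add: states_def V0s del: vec.simps)
lemma base_sym: "vec [] s = vec [] (Pw s)" using base_sym_all in_states by blast

definition uL :: "nat \<Rightarrow> st \<Rightarrow> nat" where "uL m = vec (replicate m 1)"
definition uH :: "nat \<Rightarrow> st \<Rightarrow> nat" where "uH m = vec (replicate m 0)"
definition uZ :: "nat \<Rightarrow> st \<Rightarrow> nat" where "uZ m = vec (zl m)"
lemma uL_step: "uL (Suc m) s = (\<Sum>t\<leftarrow>states. Amat 1 s t * uL m (id t))" by (simp add: uL_def)
lemma uH_step: "uH (Suc m) s = (\<Sum>t\<leftarrow>states. Amat 0 s t * uH m (id t))" by (simp add: uH_def)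
lemma uZ_step: "uZ (Suc m) s = (\<Sum>t\<leftarrow>states. Amat 0 s t * uZ m (Pw t))"
  unfolding uZ_def zl_Suc vec.simps using vec_sw[OF sym02 base_sym zl_set] by simp
lemma uL_num: "uL (numeral k) s = (\<Sum>t\<leftarrow>states. Amat 1 s t * uL (pred_numeral k) (id t))" by (simp only: numeral_eq_Suc uL_step)
lemma uH_num: "uH (numeral k) s = (\<Sum>t\<leftarrow>states. Amat 0 s t * uH (pred_numeral k) (id t))" by (simp only: numeral_eq_Suc uH_step)
lemma uZ_num: "uZ (numeral k) s = (\<Sum>t\<leftarrow>states. Amat 0 s t * uZ (pred_numeral k) (Pw t))" by (simp only: numeral_eq_Suc uZ_step)

lemma UL0: "map (uL 0) states = [0, 1, 1, 3, 1, 0, 2, 0, 1, 2, 0, 0, 2, 0, 0, 0]"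
  by (simp add: uL_def  V0s states_def del: vec.simps)

lemmas UL0s = UL0[unfolded states_def, simplified]

lemma UL1: "map (uL 1) states = [0, 3, 3, 14, 4, 0, 7, 0, 4, 7, 0, 0, 9, 0, 0, 0]"
  by (simp add: uL_step[of 0, simplified] states_def A1 UL0s)

lemmas UL1s = UL1[unfolded states_def, simplified]

lemma uL_s2: "uL 2 s = (\<Sum>t\<leftarrow>states. Amat 1 s t * uL 1 (id t))" using uL_num[of "num.Bit0 (num.One)" s] by simp

lemma UL2: "map (uL 2) states = [0, 11, 11, 57, 16, 0, 28, 0, 16, 28, 0, 0, 37, 0, 0, 0]"
  by (simp add: uL_s2 states_def A1 UL1s)

lemmas UL2s = UL2[unfolded states_def, simplified]

lemma uL_s3: "uL 3 s = (\<Sum>t\<leftarrow>states. Amat 1 s t * uL 2 (id t))" using uL_num[of "num.Bit1 (num.One)" s] by simp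

lemma UL3: "map (uL 3) states = [0, 44, 44, 229, 65, 0, 112, 0, 65, 112, 0, 0, 150, 0, 0, 0]"
  by (simp add: uL_s3 states_def A1 UL2s)

lemmas UL3s = UL3[unfolded states_def, simplified]

lemma uL_s4: "uL 4 s = (\<Sum>t\<leftarrow>states. Amat 1 s t * uL 3 (id t))" using uL_num[of "num.Bit0 (num.Bit0 (num.One))" s] by simp

lemma UL4: "map (uL 4) states = [0, 177, 177, 920, 262, 0, 450, 0, 262, 450, 0, 0, 603, 0, 0, 0]"
  by (simp add: uL_s4 states_def A1 UL3s)

lemmas UL4s = UL4[unfolded states_def, simplified]

lemma uL_s5: "uL 5 s = (\<Sum>t\<leftarrow>states. Amat 1 s t * uL 4 (id t))" using uL_num[of "num.Bit1 (num.Bit0 (num.One))" s] by simp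

lemma UL5: "map (uL 5) states = [0, 712, 712, 3697, 1053, 0, 1809, 0, 1053, 1809, 0, 0, 2423, 0, 0, 0]"
  by (simp add: uL_s5 states_def A1 UL4s)

lemmas UL5s = UL5[unfolded states_def, simplified]

lemma UH0: "map (uH 0) states = [0, 1, 1, 3, 1, 0, 2, 0, 1, 2, 0, 0, 2, 0, 0, 0]"
  by (simp add: uH_def  V0s states_def del: vec.simps)

lemmas UH0s = UH0[unfolded states_def, simplified]

lemma UH1: "map (uH 1) states = [0, 3, 5, 12, 5, 0, 7, 0, 6, 5, 0, 0, 8, 0, 0, 0]"
  by (simp add: uH_step[of 0, simplified] states_def A0 UH0s)

lemmas UH1s = UH1[unfolded states_def, simplified]

lemma uH_s2: "uH 2 s = (\<Sum>t\<leftarrow>states. Amat 0 s t * uH 1 (id t))" using uH_num[of "num.Bit0 (num.One)" s] by simp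

lemma UH2: "map (uH 2) states = [0, 12, 17, 46, 20, 0, 28, 0, 20, 20, 0, 0, 31, 0, 0, 0]"
  by (simp add: uH_s2 states_def A0 UH1s)

lemmas UH2s = UH2[unfolded states_def, simplified]

lemma uH_s3: "uH 3 s = (\<Sum>t\<leftarrow>states. Amat 0 s t * uH 2 (id t))" using uH_num[of "num.Bit1 (num.One)" s] by simp

lemma UH3: "map (uH 3) states = [0, 48, 66, 174, 75, 0, 103, 0, 78, 79, 0, 0, 115, 0, 0, 0]"
  by (simp add: uH_s3 states_def A0 UH2s)

lemmas UH3s = UH3[unfolded states_def, simplified]

lemma uH_s4: "uH 4 s = (\<Sum>t\<leftarrow>states. Amat 0 s t * uH 3 (id t))" using uH_num[of "num.Bit0 (num.Bit0 (num.One))" s] by simp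

lemma UH4: "map (uH 4) states = [0, 178, 253, 663, 288, 0, 397, 0, 301, 293, 0, 0, 445, 0, 0, 0]"
  by (simp add: uH_s4 states_def A0 UH3s)

lemmas UH4s = UH4[unfolded states_def, simplified]

lemma uH_s5: "uH 5 s = (\<Sum>t\<leftarrow>states. Amat 0 s t * uH 4 (id t))" using uH_num[of "num.Bit1 (num.Bit0 (num.One))" s] by simp

lemma UH5: "map (uH 5) states = [0, 685, 956, 2530, 1094, 0, 1510, 0, 1134, 1130, 0, 0, 1688, 0, 0, 0]"
  by (simp add: uH_s5 states_def A0 UH4s)

lemmas UH5s = UH5[unfolded states_def, simplified]

lemma uH_s6: "uH 6 s = (\<Sum>t\<leftarrow>states. Amat 0 s t * uH 5 (id t))" using uH_num[of "num.Bit0 (num.Bit1 (num.One))" s] by simp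

lemma UH6: "map (uH 6) states = [0, 2604, 3660, 9633, 4171, 0, 5750, 0, 4345, 4292, 0, 0, 6435, 0, 0, 0]"
  by (simp add: uH_s6 states_def A0 UH5s)

lemmas UH6s = UH6[unfolded states_def, simplified]

lemma uH_s7: "uH 7 s = (\<Sum>t\<leftarrow>states. Amat 0 s t * uH 6 (id t))" using uH_num[of "num.Bit1 (num.Bit1 (num.One))" s] by simp

lemma UH7: "map (uH 7) states = [0, 9921, 13925, 36719, 15897, 0, 21930, 0, 16529, 16356, 0, 0, 24534, 0, 0, 0]"
  by (simp add: uH_s7 states_def A0 UH6s)

lemmas UH7s = UH7[unfolded states_def, simplified]

lemma UZ0: "map (uZ 0) states = [0, 1, 1, 3, 1, 0, 2, 0, 1, 2, 0, 0, 2, 0, 0, 0]"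
  by (simp add: uZ_def zl_def V0s states_def del: vec.simps)

lemmas UZ0s = UZ0[unfolded states_def, simplified]

lemma UZ1: "map (uZ 1) states = [0, 3, 5, 12, 5, 0, 7, 0, 6, 5, 0, 0, 8, 0, 0, 0]"
  by (simp add: uZ_step[of 0, simplified] states_def A0 UZ0s)

lemmas UZ1s = UZ1[unfolded states_def, simplified]

lemma uZ_s2: "uZ 2 s = (\<Sum>t\<leftarrow>states. Amat 0 s t * uZ 1 (Pw t))" using uZ_num[of "num.Bit0 (num.One)" s] by simp

lemma UZ2: "map (uZ 2) states = [0, 11, 19, 45, 20, 0, 27, 0, 24, 19, 0, 0, 32, 0, 0, 0]"
  by (simp add: uZ_s2 states_def A0 UZ1s)

lemmas UZ2s = UZ2[unfolded states_def, simplified]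

lemma uZ_s3: "uZ 3 s = (\<Sum>t\<leftarrow>states. Amat 0 s t * uZ 2 (Pw t))" using uZ_num[of "num.Bit1 (num.One)" s] by simp

lemma UZ3: "map (uZ 3) states = [0, 43, 72, 173, 75, 0, 103, 0, 91, 75, 0, 0, 122, 0, 0, 0]"
  by (simp add: uZ_s3 states_def A0 UZ2s)

lemmas UZ3s = UZ3[unfolded states_def, simplified]

lemma uZ_s4: "uZ 4 s = (\<Sum>t\<leftarrow>states. Amat 0 s t * uZ 3 (Pw t))" using uZ_num[of "num.Bit0 (num.Bit0 (num.One))" s] by simp

lemma UZ4: "map (uZ 4) states = [0, 166, 276, 663, 288, 0, 394, 0, 348, 288, 0, 0, 466, 0, 0, 0]"
  by (simp add: uZ_s4 states_def A0 UZ3s)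

lemmas UZ4s = UZ4[unfolded states_def, simplified]

lemma uZ_s5: "uZ 5 s = (\<Sum>t\<leftarrow>states. Amat 0 s t * uZ 4 (Pw t))" using uZ_num[of "num.Bit1 (num.Bit0 (num.One))" s] by simp

lemma UZ5: "map (uZ 5) states = [0, 636, 1057, 2541, 1105, 0, 1511, 0, 1333, 1102, 0, 0, 1787, 0, 0, 0]"
  by (simp add: uZ_s5 states_def A0 UZ4s)

lemmas UZ5s = UZ5[unfolded states_def, simplified]

lemma uZ_s6: "uZ 6 s = (\<Sum>t\<leftarrow>states. Amat 0 s t * uZ 5 (Pw t))" using uZ_num[of "num.Bit0 (num.Bit1 (num.One))" s] by simp

lemma UZ6: "map (uZ 6) states = [0, 2435, 4052, 9739, 4234, 0, 5793, 0, 5109, 4222, 0, 0, 6850, 0, 0, 0]"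
  by (simp add: uZ_s6 states_def A0 UZ5s)

lemmas UZ6s = UZ6[unfolded states_def, simplified]

lemma uZ_s7: "uZ 7 s = (\<Sum>t\<leftarrow>states. Amat 0 s t * uZ 6 (Pw t))" using uZ_num[of "num.Bit1 (num.Bit1 (num.One))" s] by simp

lemma UZ7: "map (uZ 7) states = [0, 9331, 15532, 37325, 16226, 0, 22201, 0, 19584, 16181, 0, 0, 26253, 0, 0, 0]"
  by (simp add: uZ_s7 states_def A0 UZ6s)

lemmas UZ7s = UZ7[unfolded states_def, simplified]


definition wsum :: "(st \<Rightarrow> nat) \<Rightarrow> nat" where
  "wsum v = v (False,False,False,False) + v (False,False,False,True) + v (False,False,True,False) + v (False,False,True,True)"

lemma ell_eq: "n \<ge> 1 \<Longrightarrow> ell n = wsum (uL (n-1))"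
  unfolding ell_def polyacene_def wsum_def uL_def using Psi_chain[of "replicate (n-1) 1"] by simp
lemma hh_eq: "n \<ge> 1 \<Longrightarrow> hh n = wsum (uH (n-1))"
  unfolding hh_def helicene_def wsum_def uH_def using Psi_chain[of "replicate (n-1) 0"] by simp
lemma zz_eq: "n \<ge> 1 \<Longrightarrow> zz n = wsum (uZ (n-1))"
proof -
  assume "n \<ge> 1"
  have "\<forall>d\<in>set (zl (n-1)). d \<le> 2" using zl_set by fastforce
  thus ?thesis using \<open>n \<ge> 1\<close> Psi_chain[of "zl (n-1)"]
    unfolding zz_def zigzag_def wsum_def uZ_def zl_def by simp
qed

lemma lt5: "{..<5::nat} = {0,1,2,3,4}" by auto
lemma lt7: "{..<7::nat} = {0,1,2,3,4,5,6}" by auto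

lemma recL: "uL (m+5) s = uL m s + uL (m+1) s + 4 * uL (m+4) s"
proof -
  define c where "c = (\<lambda>i::nat. [1,1,0,0,4::nat] ! i)"
  have base_all: "\<forall>s\<in>set states. uL 5 s = uL 0 s + uL 1 s + 4 * uL 4 s"
    by (simp add: states_def UL0s UL1s UL4s UL5s)
  have base: "uL 5 s = (\<Sum>i<5. c i * uL i s)" for s
    using base_all[rule_format, OF in_states[of s]] by (simp add: lt5 c_def)
  have "uL (m+5) s = (\<Sum>i<5. c i * uL (m+i) s)" by (rule rec_gen[where u=uL and K="Amat 1" and \<sigma>=id, OF uL_step base])
  thus ?thesis by (simp add: lt5 c_def)
qed

lemma recH: "uH (m+7) s = 2 * uH m s + 4 * uH (m+1) s + 7 * uH (m+2) s + 6 * uH (m+3) s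
   + 12 * uH (m+4) s + 7 * uH (m+5) s + uH (m+6) s"
proof -
  define c where "c = (\<lambda>i::nat. [2,4,7,6,12,7,1::nat] ! i)"
  have base_all: "\<forall>s\<in>set states. uH 7 s = 2 * uH 0 s + 4 * uH 1 s + 7 * uH 2 s + 6 * uH 3 s
   + 12 * uH 4 s + 7 * uH 5 s + uH 6 s"
    by (simp add: states_def UH0s UH1s UH2s UH3s UH4s UH5s UH6s UH7s)
  have base: "uH 7 s = (\<Sum>i<7. c i * uH i s)" for s
    using base_all[rule_format, OF in_states[of s]] by (simp add: lt7 c_def)
  have "uH (m+7) s = (\<Sum>i<7. c i * uH (m+i) s)" by (rule rec_gen[where u=uH and K="Amat 0" and \<sigma>=id, OF uH_step base])
  thus ?thesis by (simp add: lt7 c_def)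
qed

lemma recZ: "uZ (m+7) s = uZ m s + 5 * uZ (m+1) s + 7 * uZ (m+2) s + 7 * uZ (m+3) s
   + 6 * uZ (m+4) s + uZ (m+5) s + 3 * uZ (m+6) s"
proof -
  define c where "c = (\<lambda>i::nat. [1,5,7,7,6,1,3::nat] ! i)"
  have base_all: "\<forall>s\<in>set states. uZ 7 s = uZ 0 s + 5 * uZ 1 s + 7 * uZ 2 s + 7 * uZ 3 s
   + 6 * uZ 4 s + uZ 5 s + 3 * uZ 6 s"
    by (simp add: states_def UZ0s UZ1s UZ2s UZ3s UZ4s UZ5s UZ6s UZ7s)
  have base: "uZ 7 s = (\<Sum>i<7. c i * uZ i s)" for s
    using base_all[rule_format, OF in_states[of s]] by (simp add: lt7 c_def)
  have "uZ (m+7) s = (\<Sum>i<7. c i * uZ (m+i) s)" by (rule rec_gen[where u=uZ and K="Amat 0" and \<sigma>=Pw, OF uZ_step base])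
  thus ?thesis by (simp add: lt7 c_def)
qed

lemma ellv: "ell 0 = 1" "ell 1 = 5" "ell 2 = 20" "ell 3 = 79" "ell 4 = 317" "ell 5 = 1274"
  by (simp_all add: ell_eq wsum_def UL0s UL1s UL2s UL3s UL4s) (simp add: ell_def)
lemma zzv: "zz 0 = 1" "zz 1 = 5" "zz 2 = 20" "zz 3 = 75" "zz 4 = 288" "zz 5 = 1105" "zz 6 = 4234" "zz 7 = 16226"
  by (simp_all add: zz_eq wsum_def UZ0s UZ1s UZ2s UZ3s UZ4s UZ5s UZ6s) (simp add: zz_def)
lemma hhv: "hh 0 = 1" "hh 1 = 5" "hh 2 = 20" "hh 3 = 75" "hh 4 = 288" "hh 5 = 1094" "hh 6 = 4171" "hh 7 = 15897"
  by (simp_all add: hh_eq wsum_def UH0s UH1s UH2s UH3s UH4s UH5s UH6s) (simp add: hh_def)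

lemma ell_rec: "n \<ge> 5 \<Longrightarrow> ell n = 4 * ell (n-1) + ell (n-4) + ell (n-5)"
proof -
  assume n: "n \<ge> 5"
  show ?thesis
  proof (cases "n = 5")
    case True thus ?thesis using ellv by simp
  next
    case False
    define m where "m = n - 6"
    have nm: "n = m + 6" using n False unfolding m_def by arith
    have e: "ell n = wsum (uL (m+5))" "ell (n-1) = wsum (uL (m+4))" "ell (n-4) = wsum (uL (m+1))"
      "ell (n-5) = wsum (uL m)" using ell_eq nm by (simp_all add: add.commute)
    show ?thesis unfolding e wsum_def recL by simp
  qed
qed

lemma zz_rec: "n \<ge> 7 \<Longrightarrow> zz n = 3 * zz (n-1) + zz (n-2) + 6 * zz (n-3) + 7 * zz (n-4)
                        + 7 * zz (n-5) + 5 * zz (n-6) + zz (n-7)"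
proof -
  assume n: "n \<ge> 7"
  show ?thesis
  proof (cases "n = 7")
    case True thus ?thesis using zzv by simp
  next
    case False
    define m where "m = n - 8"
    have nm: "n = m + 8" using n False unfolding m_def by arith
    have e: "zz n = wsum (uZ (m+7))" "zz (n-1) = wsum (uZ (m+6))" "zz (n-2) = wsum (uZ (m+5))"
      "zz (n-3) = wsum (uZ (m+4))" "zz (n-4) = wsum (uZ (m+3))" "zz (n-5) = wsum (uZ (m+2))"
      "zz (n-6) = wsum (uZ (m+1))" "zz (n-7) = wsum (uZ m)" using zz_eq nm by (simp_all add: add.commute)
    show ?thesis unfolding e wsum_def recZ by simp
  qed
qed

lemma hh_rec: "n \<ge> 7 \<Longrightarrow> hh n = hh (n-1) + 7 * hh (n-2) + 12 * hh (n-3) + 6 * hh (n-4)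
                        + 7 * hh (n-5) + 4 * hh (n-6) + 2 * hh (n-7)"
proof -
  assume n: "n \<ge> 7"
  show ?thesis
  proof (cases "n = 7")
    case True thus ?thesis using hhv by simp
  next
    case False
    define m where "m = n - 8"
    have nm: "n = m + 8" using n False unfolding m_def by arith
    have e: "hh n = wsum (uH (m+7))" "hh (n-1) = wsum (uH (m+6))" "hh (n-2) = wsum (uH (m+5))"
      "hh (n-3) = wsum (uH (m+4))" "hh (n-4) = wsum (uH (m+3))" "hh (n-5) = wsum (uH (m+2))"
      "hh (n-6) = wsum (uH (m+1))" "hh (n-7) = wsum (uH m)" using hh_eq nm by (simp_all add: add.commute)
    show ?thesis unfolding e wsum_def recH by simp
  qed
qed

theorem corollary4p5:
  shows "(ell 0 = 1 \<and> ell 1 = 5 \<and> ell 2 = 20 \<and> ell 3 = 79 \<and> ell 4 = 317 \<and>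
          (\<forall>n\<ge>5. ell n = 4 * ell (n-1) + ell (n-4) + ell (n-5)))
       \<and> (zz 0 = 1 \<and> zz 1 = 5 \<and> zz 2 = 20 \<and> zz 3 = 75 \<and> zz 4 = 288 \<and> zz 5 = 1105 \<and> zz 6 = 4234 \<and>
          (\<forall>n\<ge>7. zz n = 3 * zz (n-1) + zz (n-2) + 6 * zz (n-3) + 7 * zz (n-4)
                        + 7 * zz (n-5) + 5 * zz (n-6) + zz (n-7)))
       \<and> (hh 0 = 1 \<and> hh 1 = 5 \<and> hh 2 = 20 \<and> hh 3 = 75 \<and> hh 4 = 288 \<and> hh 5 = 1094 \<and> hh 6 = 4171 \<and>
          (\<forall>n\<ge>7. hh n = hh (n-1) + 7 * hh (n-2) + 12 * hh (n-3) + 6 * hh (n-4)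
                        + 7 * hh (n-5) + 4 * hh (n-6) + 2 * hh (n-7)))"
  using ellv zzv hhv ell_rec zz_rec hh_rec by blast

end
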